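(* Let $\Phi_p\in\mathbb{R}^{n\times d}$ be fixed with $\hat\Sigma:=\tfrac1n\Phi_p^\top\Phi_p=\mathrm{diag}(\sigma_1^2,\dots,\sigma_d^2)$, all $\sigma_j^2>0$. Suppose $Y_p=\Phi_p\beta_0+\epsilon$ with $\beta_0\in\mathbb{R}^d$ and $\epsilon\in\mathbb{R}^n$ having i.i.d. entries of mean $0$ and variance $\sigma^2$. Let $\mu\in\mathbb{R}^{1\times d}$ be a fixed target mean vector (the population target feature mean $\mathbb{E}[\Phi_q]$), let $\lambda,\delta\ge0$, let $\hat\beta^\lambda:=(\hat\Sigma+\lambda I)^{-1}\Phi_p^\top Y_p/n$, let $\hat v:=\mu(\hat\Sigma+\delta I)^{-1}\Phi_p^\top/n$, and consider the augmented estimator $\hat\psi:=\mu\hat\beta^\lambda+\hat v(Y_p-\Phi_p\hat\beta^\lambda)$ of $\mu\beta_0$. Let $\Gamma_{\lambda,\delta}:=\mathrm{diag}(\gamma_1,\dots,\gamma_d)$ with $\gamma_j:=\frac{\delta\lambda}{\sigma_j^2+\delta+\lambda}$ (and $\gamma_j:=0$ if $\delta=\lambda=0$). Then, with expectation and variance taken over $\epsilon$, $$\big(\mathbb{E}[\hat\psi]-\mu\beta_0\big)^2=\beta_0^\top(\hat\Sigma+\Gamma_{\lambda,\delta})^{-1}\Gamma_{\lambda,\delta}\,\mu^\top\mu\,\Gamma_{\lambda,\delta}(\hat\Sigma+\Gamma_{\lambda,\delta})^{-1}\beta_0,$$ $$\mathrm{Var}(\hat\psi)=\frac{\sigma^2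}{n}\,\mathrm{tr}\!\left[\hat\Sigma(\hat\Sigma+\Gamma_{\lambda,\delta})^{-1}\mu^\top\mu(\hat\Sigma+\Gamma_{\lambda,\delta})^{-1}\right].$$
   Context: This is a design-conditional analysis: $\Phi_p$ and the target mean $\mu$ are treated as fixed; only the noise $\epsilon$ is random. The hyperparameters are on the rescaled scale where ridge regression is $(\hat\Sigma+\lambda I)^{-1}\Phi_p^\top Y_p/n$. *)

theory Defs
  imports "HOL-Analysis.Analysis" "HOL-Probability.Probability"
begin

definition emp_cov :: "real^'d^'n \<Rightarrow> real^'d^'d" where
  "emp_cov Phi = (1 / real CARD('n)) *\<^sub>R (transpose Phi ** Phi)"

definition diag_mat :: "('d \<Rightarrow> real) \<Rightarrow> real^'d^'d" where
  "diag_mat f = (\<chi> i j. if i = j then f i else 0)"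

definition outer :: "real^'d \<Rightarrow> real^'d^'d" where
  "outer mu = (\<chi> i j. mu $ i * mu $ j)"

definition gam :: "('d \<Rightarrow> real) \<Rightarrow> real \<Rightarrow> real \<Rightarrow> 'd \<Rightarrow> real" where
  "gam s dlt lam j = (if dlt = 0 \<and> lam = 0 then 0 else dlt * lam / (s j + dlt + lam))"

end

theory Submission imports Defs begin

lemma sum_delta_mult[simp]:
  "(\<Sum>k\<in>UNIV. (if i = k then a k else 0) * b k) = a i * (b i::real)"
  "(\<Sum>k\<in>UNIV. b k * (if k = i then a k else 0)) = b i * (a i::real)"
  for a :: "'n::finite \<Rightarrow> real"
  by (simp_all add: if_distrib if_distribR sum.delta sum.delta' cong: if_cong)

lemma diag_mult_diag: "diag_mat f ** diag_mat g = diag_mat (\<lambda>j. f j * g j)"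
  by (simp add: diag_mat_def matrix_matrix_mult_def vec_eq_iff sum_delta_mult)

lemma diag_add: "diag_mat f + diag_mat g = diag_mat (\<lambda>j. f j + g j)"
  by (simp add: diag_mat_def vec_eq_iff)

lemma diag_add_scalar: "diag_mat f + c *\<^sub>R mat 1 = diag_mat (\<lambda>j. f j + c)"
  by (simp add: diag_mat_def vec_eq_iff mat_def)

lemma diag_one: "diag_mat (\<lambda>j. 1) = mat 1"
  by (simp add: diag_mat_def vec_eq_iff mat_def)

lemma diag_vec: "diag_mat f *v x = (\<chi> j. f j * x $ j)"
  by (simp add: diag_mat_def matrix_vector_mult_def vec_eq_iff sum_delta_mult)

lemma diag_left: "diag_mat f ** B = (\<chi> i j. f i * B $ i $ j)"
  by (simp add: diag_mat_def matrix_matrix_mult_def vec_eq_iff sum_delta_mult)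

lemma diag_right: "B ** diag_mat f = (\<chi> i j. B $ i $ j * f j)"
  by (simp add: diag_mat_def matrix_matrix_mult_def vec_eq_iff sum_delta_mult)

lemma inv_diag:
  assumes "\<And>j. f j \<noteq> 0"
  shows "matrix_inv (diag_mat f :: real^'d^'d) = diag_mat (\<lambda>j. 1 / f j)"
proof -
  let ?B = "diag_mat (\<lambda>j. 1 / f j) :: real^'d^'d"
  have 1: "diag_mat f ** ?B = mat 1" "?B ** diag_mat f = mat 1"
    using assms by (simp_all add: diag_mult_diag diag_one[symmetric])
  then have ex: "\<exists>A'. diag_mat f ** A' = mat 1 \<and> A' ** diag_mat f = (mat 1 :: real^'d^'d)" by blast
  define A' where "A' = matrix_inv (diag_mat f :: real^'d^'d)"
  have "diag_mat f ** A' = mat 1 \<and> A' ** diag_mat f = mat 1"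
    unfolding A'_def matrix_inv_def by (rule someI_ex[OF ex])
  then have "A' = A' ** (diag_mat f ** ?B)" using 1 by simp
  also have "\<dots> = ?B" using \<open>diag_mat f ** A' = mat 1 \<and> A' ** diag_mat f = mat 1\<close>
    by (simp add: matrix_mul_assoc)
  finally show ?thesis unfolding A'_def .
qed


lemma (in prob_space) lin_comb_stats:
  fixes e :: "'i::finite \<Rightarrow> 'a \<Rightarrow> real"
  assumes rv: "\<And>i. e i \<in> borel_measurable M"
    and indep: "indep_vars (\<lambda>_. borel) e UNIV"
    and sq: "\<And>i. integrable M (\<lambda>w. (e i w)\<^sup>2)"
    and m0: "\<And>i. expectation (e i) = 0"
    and var: "\<And>i. variance (e i) = sg\<^sup>2"
  shows "expectation (\<lambda>w. K + (\<Sum>i\<in>UNIV. c i * e i w)) = K"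
    and "variance (\<lambda>w. K + (\<Sum>i\<in>UNIV. c i * e i w)) = sg\<^sup>2 * (\<Sum>i\<in>UNIV. (c i)\<^sup>2)"
proof -
  have int: "integrable M (e i)" for i
    by (rule square_integrable_imp_integrable[OF rv sq])
  have prodint: "integrable M (\<lambda>w. e i w * e k w)" for i k
  proof (cases "i = k")
    case True then show ?thesis using sq[of i] by (simp add: power2_eq_square)
  next
    case False
    have "integrable M (\<lambda>w. \<Prod>j\<in>{i,k}. e j w)"
      by (rule indep_vars_integrable) (auto intro: indep_vars_subset[OF indep] int)
    then show ?thesis using False by simp
  qed
  have cov: "expectation (\<lambda>w. e i w * e k w) = (if i = k then sg\<^sup>2 else 0)" for i k
  proof (cases "i = k")
    case True
    have "variance (e i) = expectation (\<lambda>w. e i w * e i w)"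
      using m0[of i] by (simp add: power2_eq_square)
    then show ?thesis using True var[of i] by simp
  next
    case False
    have "expectation (\<lambda>w. \<Prod>j\<in>{i,k}. e j w) = (\<Prod>j\<in>{i,k}. expectation (e j))"
      by (rule indep_vars_lebesgue_integral) (auto intro: indep_vars_subset[OF indep] int)
    then show ?thesis using False m0 by simp
  qed
  have S: "expectation (\<lambda>w. \<Sum>i\<in>UNIV. c i * e i w) = 0"
    using int m0 by (simp add: Bochner_Integration.integral_sum)
  have Sint: "integrable M (\<lambda>w. \<Sum>i\<in>UNIV. c i * e i w)"
    using int by auto
  show E: "expectation (\<lambda>w. K + (\<Sum>i\<in>UNIV. c i * e i w)) = K"
    using Sint S by (simp add: prob_space)
  have "variance (\<lambda>w. K + (\<Sum>i\<in>UNIV. c i * e i w))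
      = expectation (\<lambda>w. \<Sum>i\<in>UNIV. \<Sum>k\<in>UNIV. c i * c k * (e i w * e k w))"
    unfolding E by (simp add: power2_eq_square sum_product algebra_simps)
  also have "\<dots> = (\<Sum>i\<in>UNIV. \<Sum>k\<in>UNIV. c i * c k * expectation (\<lambda>w. e i w * e k w))"
    using prodint by (simp add: Bochner_Integration.integral_sum)
  also have "\<dots> = sg\<^sup>2 * (\<Sum>i\<in>UNIV. (c i)\<^sup>2)"
    by (simp add: cov if_distrib sum.delta' sum_distrib_left power2_eq_square algebra_simps cong: if_cong)
  finally show "variance (\<lambda>w. K + (\<Sum>i\<in>UNIV. c i * e i w)) = sg\<^sup>2 * (\<Sum>i\<in>UNIV. (c i)\<^sup>2)" .
qed


lemma mv_scale: "(A::real^'a^'b) *v (c *\<^sub>R x) = c *\<^sub>R (A *v x)"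
  by (simp add: matrix_vector_mult_def vec_eq_iff sum_distrib_left algebra_simps)

lemma scalar_id:
  fixes s l d :: real
  assumes "s > 0" "l \<ge> 0" "d \<ge> 0"
  shows "1/(s+l) + (1/(s+d)) * (1 - s/(s+l)) = 1 / (s + (if d = 0 \<and> l = 0 then 0 else d*l/(s+d+l)))"
proof -
  have h: "s + d + l > 0" "s + d > 0" "s + l > 0" using assms by simp_all
  have L: "1/(s+l) + (1/(s+d)) * (1 - s/(s+l)) = (s+d+l)/((s+d)*(s+l))"
  proof -
    have e1: "1 - s/(s+l) = l/(s+l)" using h by (simp add: field_simps)
    have e2: "1/(s+l) = (s+d)/((s+d)*(s+l))" using h by simp
    have "1/(s+l) + (1/(s+d)) * (1 - s/(s+l)) = (s+d)/((s+d)*(s+l)) + l/((s+d)*(s+l))"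
      unfolding e1 e2 by (simp only: times_divide_times_eq mult_1)
    also have "\<dots> = (s+d+l)/((s+d)*(s+l))" by (rule add_divide_distrib[symmetric])
    finally show ?thesis .
  qed
  have R: "s + d*l/(s+d+l) = ((s+d)*(s+l))/(s+d+l)"
    using h by (simp add: field_simps)
  show ?thesis
  proof (cases "d = 0 \<and> l = 0")
    case True then show ?thesis using assms by simp
  next
    case False then show ?thesis unfolding L using R h by simp
  qed
qed

theorem mainTheorem9:
  fixes Phi :: "real^'d^'n" and s :: "'d \<Rightarrow> real"
    and beta0 mu :: "real^'d" and lam dlt sigma :: real
    and M :: "'w measure" and eps :: "'w \<Rightarrow> real^'n"
  assumes diag: "emp_cov Phi = diag_mat s"
    and spos: "\<And>j. s j > 0"
    and lam: "lam \<ge> 0" and dlt: "dlt \<ge> 0"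
    and P: "prob_space M"
    and rv: "\<And>i. (\<lambda>w. eps w $ i) \<in> borel_measurable M"
    and indep: "prob_space.indep_vars M (\<lambda>_. borel) (\<lambda>i w. eps w $ i) UNIV"
    and ident: "\<And>i k. distr M borel (\<lambda>w. eps w $ i) = distr M borel (\<lambda>w. eps w $ k)"
    and sq_int: "\<And>i. integrable M (\<lambda>w. (eps w $ i)\<^sup>2)"
    and mean0: "\<And>i. prob_space.expectation M (\<lambda>w. eps w $ i) = 0"
    and var: "\<And>i. prob_space.variance M (\<lambda>w. eps w $ i) = sigma\<^sup>2"
  shows
    "let n = real CARD('n);
         Sig = emp_cov Phi;
         Y = (\<lambda>w. Phi *v beta0 + eps w);
         betahat = (\<lambda>w. (1 / n) *\<^sub>R (matrix_inv (Sig + lam *\<^sub>R mat 1) *v (transpose Phi *v Y w)));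
         vhat = (1 / n) *\<^sub>R (mu v* (matrix_inv (Sig + dlt *\<^sub>R mat 1) ** transpose Phi));
         psi = (\<lambda>w. mu \<bullet> betahat w + vhat \<bullet> (Y w - Phi *v betahat w));
         G = diag_mat (gam s dlt lam);
         A = matrix_inv (Sig + G)
     in (prob_space.expectation M psi - mu \<bullet> beta0)\<^sup>2
          = beta0 \<bullet> ((A ** G ** outer mu ** G ** A) *v beta0)
      \<and> prob_space.variance M psi
          = sigma\<^sup>2 / n * trace (Sig ** A ** outer mu ** A)"
proof -
  interpret prob_space M by (rule P)
  define n where "n = real CARD('n)"
  define Sig where "Sig = emp_cov Phi"
  define Y where "Y = (\<lambda>w. Phi *v beta0 + eps w)"
  define betahat where "betahat = (\<lambda>w. (1 / n) *\<^sub>R (matrix_inv (Sig + lam *\<^sub>R mat 1) *v (transpose Phi *v Y w)))"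
  define vhat where "vhat = (1 / n) *\<^sub>R (mu v* (matrix_inv (Sig + dlt *\<^sub>R mat 1) ** transpose Phi))"
  define psi where "psi = (\<lambda>w. mu \<bullet> betahat w + vhat \<bullet> (Y w - Phi *v betahat w))"
  define G where "G = diag_mat (gam s dlt lam)"
  define A where "A = matrix_inv (Sig + G)"
  define a where "a = (\<lambda>j. 1 / (s j + gam s dlt lam j))"
  have npos: "n > 0" unfolding n_def by simp
  have gnn: "gam s dlt lam j \<ge> 0" for j
    using spos[of j] lam dlt by (auto simp: gam_def)
  have SigD: "Sig = diag_mat s" using diag Sig_def by simp
  have Adef: "A = diag_mat a"
    unfolding A_def SigD G_def diag_add a_def
    by (rule inv_diag) (metis spos gnn add_pos_nonneg less_irrefl)
  have Linv: "matrix_inv (Sig + lam *\<^sub>R mat 1) = diag_mat (\<lambda>j. 1 / (s j + lam))"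
    unfolding SigD diag_add_scalar
    by (rule inv_diag) (metis spos lam add_pos_nonneg less_irrefl)
  have Dinv: "matrix_inv (Sig + dlt *\<^sub>R mat 1) = diag_mat (\<lambda>j. 1 / (s j + dlt))"
    unfolding SigD diag_add_scalar
    by (rule inv_diag) (metis spos dlt add_pos_nonneg less_irrefl)
  have PtP: "(transpose Phi ** Phi) = n *\<^sub>R Sig"
    using npos unfolding Sig_def emp_cov_def n_def by simp
  define L where "L = diag_mat (\<lambda>j. 1 / (s j + lam))"
  define Dv where "Dv = diag_mat (\<lambda>j. 1 / (s j + dlt))"
  define u where "u = (\<lambda>w. (1/n) *\<^sub>R (transpose Phi *v Y w))"
  have mvs: "(c *\<^sub>R B) *v x = c *\<^sub>R (B *v x)" for c and B :: "real^'d^'d" and x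
    by (simp add: matrix_vector_mult_def vec_eq_iff sum_distrib_left algebra_simps)
  have u_eq: "u w = Sig *v beta0 + (1/n) *\<^sub>R (transpose Phi *v eps w)" for w
    unfolding u_def Y_def matrix_vector_right_distrib matrix_vector_mul_assoc PtP mvs
    using npos by (simp add: scaleR_add_right)
  have bh: "betahat w = L *v u w" for w
    unfolding betahat_def u_def Linv L_def mv_scale ..
  have vh: "vhat \<bullet> x = mu \<bullet> (Dv *v ((1/n) *\<^sub>R (transpose Phi *v x)))" for x
    unfolding vhat_def Dinv Dv_def inner_scaleR_left dot_lmul_matrix mv_scale inner_scaleR_right
      matrix_vector_mul_assoc[symmetric] ..
  have r: "(1/n) *\<^sub>R (transpose Phi *v (Y w - Phi *v betahat w)) = u w - Sig *v betahat w" for w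
    unfolding matrix_vector_mult_diff_distrib matrix_vector_mul_assoc PtP mvs u_def
    using npos by (simp add: scaleR_diff_right)
  have psi1: "psi w = mu \<bullet> (Adiag *v u w)" if "Adiag = diag_mat a" for w Adiag
  proof -
    have "psi w = mu \<bullet> (L *v u w + Dv *v (u w - Sig *v (L *v u w)))"
      unfolding psi_def vh r unfolding bh inner_add_right ..
    also have "L *v u w + Dv *v (u w - Sig *v (L *v u w)) = Adiag *v u w"
      unfolding that L_def Dv_def SigD diag_vec a_def
    proof (subst vec_eq_iff, intro allI)
      fix j
      define p where "p = 1 / (s j + lam)"
      define q where "q = 1 / (s j + dlt)"
      define x where "x = u w $ j"
      have "p * x + q * (x - s j * (p * x)) = (p + q * (1 - s j * p)) * x"
        by (simp add: algebra_simps)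
      also have "p + q * (1 - s j * p) = 1 / (s j + gam s dlt lam j)"
        unfolding p_def q_def gam_def using scalar_id[OF spos[of j] lam dlt] by simp
      finally show "((\<chi> j. 1 / (s j + lam) * u w $ j) +
          (\<chi> ja. 1 / (s ja + dlt) * (u w - (\<chi> j. s j * (\<chi> j. 1 / (s j + lam) * u w $ j) $ j)) $ ja)) $ j =
          (\<chi> j. 1 / (s j + gam s dlt lam j) * u w $ j) $ j"
        unfolding p_def q_def x_def by simp
    qed
    finally show ?thesis .
  qed
  define g where "g = gam s dlt lam"
  define K where "K = (\<Sum>j\<in>UNIV. mu$j * a j * s j * beta0$j)"
  define c where "c = (\<lambda>i. (1/n) * (\<Sum>j\<in>UNIV. Phi$i$j * (a j * mu$j)))"
  have psi_eq: "psi w = K + (\<Sum>i\<in>UNIV. c i * eps w $ i)" for w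
  proof -
    have "psi w = mu \<bullet> (diag_mat a *v u w)" by (rule psi1) simp
    also have "\<dots> = (\<Sum>j\<in>UNIV. mu$j * a j * (s j * beta0$j + (1/n) * (\<Sum>i\<in>UNIV. Phi$i$j * eps w $ i)))"
      unfolding u_eq SigD diag_vec inner_vec_def
      by (simp add: matrix_vector_mult_def transpose_def mult.assoc)
    also have "\<dots> = K + (\<Sum>j\<in>UNIV. \<Sum>i\<in>UNIV. (1/n) * (Phi$i$j * (a j * mu$j)) * eps w $ i)"
      unfolding K_def distrib_left sum.distrib sum_distrib_left
      by (intro arg_cong2[where f="(+)"] sum.cong refl) (simp_all add: ac_simps)
    also have "\<dots> = K + (\<Sum>i\<in>UNIV. \<Sum>j\<in>UNIV. (1/n) * (Phi$i$j * (a j * mu$j)) * eps w $ i)"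
      by (subst sum.swap) (rule refl)
    also have "\<dots> = K + (\<Sum>i\<in>UNIV. c i * eps w $ i)"
      unfolding c_def sum_distrib_left sum_distrib_right ..
    finally show ?thesis .
  qed
  have psiF: "psi = (\<lambda>w. K + (\<Sum>i\<in>UNIV. c i * eps w $ i))" using psi_eq by auto
  note st = lin_comb_stats[where e="\<lambda>i w. eps w $ i" and K=K and c=c, OF rv indep sq_int mean0 var]
  have Epsi: "expectation psi = K" unfolding psiF by (rule st(1))
  have Vpsi: "variance psi = sigma\<^sup>2 * (\<Sum>i\<in>UNIV. (c i)\<^sup>2)" unfolding psiF by (rule st(2))
  have Gg: "G = diag_mat g" unfolding G_def g_def ..
  have ag: "a j * s j - 1 = - (a j * g j)" for j
  proof -
    have "s j + g j > 0" using spos[of j] gnn[of j] unfolding g_def by (simp add: add_pos_nonneg)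
    then show ?thesis unfolding a_def g_def by (simp add: field_simps)
  qed
  define p where "p = (\<lambda>j. a j * g j * mu$j)"
  have KT: "K - mu \<bullet> beta0 = - (\<Sum>j\<in>UNIV. p j * beta0$j)"
  proof -
    have "K - mu \<bullet> beta0 = (\<Sum>j\<in>UNIV. mu$j * (a j * s j - 1) * beta0$j)"
      unfolding K_def inner_vec_def by (simp add: sum_subtractf[symmetric] algebra_simps)
    also have "\<dots> = - (\<Sum>j\<in>UNIV. p j * beta0$j)"
      unfolding ag p_def by (simp add: sum_negf[symmetric] algebra_simps)
    finally show ?thesis .
  qed
  have Mx: "A ** G ** outer mu ** G ** A = (\<chi> i j. p i * p j)"
    unfolding Adef Gg diag_mult_diag unfolding diag_left p_def
    by (simp add: diag_right outer_def vec_eq_iff algebra_simps)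
  have bias: "(expectation psi - mu \<bullet> beta0)\<^sup>2 = beta0 \<bullet> ((A ** G ** outer mu ** G ** A) *v beta0)"
  proof -
    have "(expectation psi - mu \<bullet> beta0)\<^sup>2 = (\<Sum>i\<in>UNIV. p i * beta0$i)\<^sup>2"
      unfolding Epsi KT by simp
    also have "\<dots> = (\<Sum>i\<in>UNIV. \<Sum>j\<in>UNIV. beta0$i * (p i * p j * beta0$j))"
      unfolding power2_eq_square sum_product by (simp add: ac_simps)
    also have "\<dots> = beta0 \<bullet> ((A ** G ** outer mu ** G ** A) *v beta0)"
      unfolding Mx inner_vec_def matrix_vector_mult_def by (simp add: sum_distrib_left)
    finally show ?thesis .
  qed
  define b where "b = (\<lambda>j. a j * mu$j)"
  have Pjk: "(\<Sum>i\<in>UNIV. Phi$i$j * Phi$i$k) = n * (if j = k then s j else 0)" for j k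
  proof -
    have "(transpose Phi ** Phi)$j$k = (n *\<^sub>R Sig)$j$k" using PtP by simp
    then show ?thesis unfolding SigD
      by (simp add: matrix_matrix_mult_def transpose_def diag_mat_def)
  qed
  have trc: "trace (Sig ** A ** outer mu ** A) = (\<Sum>j\<in>UNIV. s j * (b j)\<^sup>2)"
    unfolding SigD Adef diag_mult_diag unfolding diag_left trace_def b_def
    by (simp add: diag_right outer_def power2_eq_square algebra_simps)
  have csum: "(\<Sum>i\<in>UNIV. (c i)\<^sup>2) = (1/n) * (\<Sum>j\<in>UNIV. s j * (b j)\<^sup>2)"
  proof -
    have "(\<Sum>i\<in>UNIV. (c i)\<^sup>2) = (1/n)^2 * (\<Sum>i\<in>UNIV. \<Sum>j\<in>UNIV. \<Sum>k\<in>UNIV. b j * b k * (Phi$i$j * Phi$i$k))"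
    proof -
      have cb: "(c i)\<^sup>2 = (1/n)^2 * (\<Sum>j\<in>UNIV. \<Sum>k\<in>UNIV. b j * b k * (Phi$i$j * Phi$i$k))" for i
      proof -
        have "c i = (1/n) * (\<Sum>j\<in>UNIV. Phi$i$j * b j)" by (simp add: c_def b_def)
        then have "(c i)\<^sup>2 = (1/n)^2 * ((\<Sum>j\<in>UNIV. Phi$i$j * b j) * (\<Sum>k\<in>UNIV. Phi$i$k * b k))"
          by (simp add: power2_eq_square)
        also have "\<dots> = (1/n)^2 * (\<Sum>j\<in>UNIV. \<Sum>k\<in>UNIV. b j * b k * (Phi$i$j * Phi$i$k))"
          unfolding sum_product by (simp add: ac_simps)
        finally show ?thesis .
      qed
      show ?thesis unfolding cb sum_distrib_left[symmetric] ..
    qed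
    also have "\<dots> = (1/n)^2 * (\<Sum>j\<in>UNIV. \<Sum>k\<in>UNIV. b j * b k * (\<Sum>i\<in>UNIV. Phi$i$j * Phi$i$k))"
    proof -
      have "(\<Sum>i\<in>UNIV. \<Sum>j\<in>UNIV. \<Sum>k\<in>UNIV. b j * b k * (Phi$i$j * Phi$i$k))
          = (\<Sum>j\<in>UNIV. \<Sum>i\<in>UNIV. \<Sum>k\<in>UNIV. b j * b k * (Phi$i$j * Phi$i$k))"
        by (rule sum.swap)
      also have "\<dots> = (\<Sum>j\<in>UNIV. \<Sum>k\<in>UNIV. \<Sum>i\<in>UNIV. b j * b k * (Phi$i$j * Phi$i$k))"
        by (rule sum.cong[OF refl], rule sum.swap)
      also have "\<dots> = (\<Sum>j\<in>UNIV. \<Sum>k\<in>UNIV. b j * b k * (\<Sum>i\<in>UNIV. Phi$i$j * Phi$i$k))"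
        by (simp only: sum_distrib_left)
      finally show ?thesis by simp
    qed
    also have "\<dots> = (1/n)^2 * (\<Sum>j\<in>UNIV. \<Sum>k\<in>UNIV. n * (b j * b k * (if j = k then s j else 0)))"
      unfolding Pjk by (simp add: ac_simps)
    also have "\<dots> = (1/n) * (\<Sum>j\<in>UNIV. s j * (b j)\<^sup>2)"
    proof -
      have "(\<Sum>k\<in>UNIV. n * (b j * b k * (if j = k then s j else 0))) = n * (s j * (b j)\<^sup>2)" for j
      proof -
        have "(\<Sum>k\<in>UNIV. n * (b j * b k * (if j = k then s j else 0))) = (\<Sum>k\<in>UNIV. if j = k then n * (s j * (b j)\<^sup>2) else 0)"
          by (rule sum.cong) (auto simp: power2_eq_square)
        then show ?thesis by simp
      qed
      then have "(1/n)^2 * (\<Sum>j\<in>UNIV. \<Sum>k\<in>UNIV. n * (b j * b k * (if j = k then s j else 0)))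
          = (1/n)^2 * (n * (\<Sum>j\<in>UNIV. s j * (b j)\<^sup>2))" by (simp add: sum_distrib_left)
      then show ?thesis using npos by (simp add: power2_eq_square)
    qed
    finally show ?thesis .
  qed
  have vr: "variance psi = sigma\<^sup>2 / n * trace (Sig ** A ** outer mu ** A)"
    unfolding Vpsi csum trc by simp
  show ?thesis
    using bias vr
    unfolding Let_def psi_def betahat_def vhat_def Y_def A_def G_def Sig_def n_def
    by simp
qed
end
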